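(* In the setting described in the context, suppose $T$ and $A$ are irreducible. Then for each $j\in\{1,\dots,M\}$ there exists a nonzero integer $k_j$ such that $(0,j)\to(k_j,j)$ in the Markov additive process with kernel $\{\Gamma_A(k)\}_{k\in\mathbb Z}$.
   Context: Let $M_0,M$ be positive integers. Consider a discrete-time Markov chain of M/G/1 type with state space $\{(0,j):1\le j\le M_0\}\cup\{(k,j):k\ge1,1\le j\le M\}$ and transition matrix in lexicographic order \[ T=\begin{pmatrix}B(0)&B(1)&B(2)&\cdots\\ C(0)&A(1)&A(2)&\cdots\\ O&A(0)&A(1)&\cdots\\ O&O&A(0)&\cdots\\ \vdots&\vdots&\vdots&\ddots\end{pmatrix}, \] with nonnegative blocks $A(k)$ ($M\times M$), $B(0)$, $B(k)$, $C(0)$ of compatible sizes, $A=\sum_{k\ge0}A(k)$ stochastic, $B(0)e+\sum_{k\ge1}B(k)e=e$. Let $\Gamma_A(k)=A(k+1)$ for $k\ge-1$ and $\Gamma_A(k)=O$ for $k\le-2$. The Markov additive process with kernel $\{\Gamma_A(k)\}$ on $\mathbb Z\times\{1,\dots,M\}$ moves from $(k_0,i)$ to $(k_0+k,j)$ with probability $[\Gamma_A(k)]_{i,j}$; $(k_1,j_1)\to(k_2,j_2)$ means $(k_2,j_2)$ is reached from $(k_1,j_1)$ with positive probability along some path of positive length. *)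

theory Defs
  imports Complex_Main
begin

text \<open>Blocks are represented as functions of (1-based) row/column indices:
  A k i j = [A(k)]_{i,j}  (1 \<le> i,j \<le> M),  B0 i j = [B(0)]_{i,j} (1 \<le> i,j \<le> M0),
  B k i j = [B(k)]_{i,j} (k \<ge> 1, 1 \<le> i \<le> M0, 1 \<le> j \<le> M),
  C0 i j = [C(0)]_{i,j} (1 \<le> i \<le> M, 1 \<le> j \<le> M0).\<close>

definition state_space :: "nat \<Rightarrow> nat \<Rightarrow> (nat \<times> nat) set" where
  "state_space M0 M = {(0, j) | j. 1 \<le> j \<and> j \<le> M0} \<union> {(k, j) | k j. 1 \<le> k \<and> 1 \<le> j \<and> j \<le> M}"

fun Tmat :: "(nat \<Rightarrow> nat \<Rightarrow> real) \<Rightarrow> (nat \<Rightarrow> nat \<Rightarrow> nat \<Rightarrow> real) \<Rightarrow>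
             (nat \<Rightarrow> nat \<Rightarrow> real) \<Rightarrow> (nat \<Rightarrow> nat \<Rightarrow> nat \<Rightarrow> real) \<Rightarrow>
             nat \<times> nat \<Rightarrow> nat \<times> nat \<Rightarrow> real" where
  "Tmat B0 B C0 A (k, i) (l, j) =
     (if k = 0 then (if l = 0 then B0 i j else B l i j)
      else if l = 0 then (if k = 1 then C0 i j else 0)
      else if k \<le> l + 1 then A (l + 1 - k) i j else 0)"

definition Asum :: "(nat \<Rightarrow> nat \<Rightarrow> nat \<Rightarrow> real) \<Rightarrow> nat \<Rightarrow> nat \<Rightarrow> real" where
  "Asum A i j = (\<Sum>k. A k i j)"

definition irreducible_on :: "'s set \<Rightarrow> ('s \<Rightarrow> 's \<Rightarrow> real) \<Rightarrow> bool" where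
  "irreducible_on S P \<longleftrightarrow>
     (\<forall>x\<in>S. \<forall>y\<in>S. (x, y) \<in> {(u, v). u \<in> S \<and> v \<in> S \<and> P u v > 0}\<^sup>+)"

definition GammaA :: "(nat \<Rightarrow> nat \<Rightarrow> nat \<Rightarrow> real) \<Rightarrow> int \<Rightarrow> nat \<Rightarrow> nat \<Rightarrow> real" where
  "GammaA A k i j = (if k \<ge> -1 then A (nat (k + 1)) i j else 0)"

definition MAP_step :: "nat \<Rightarrow> (nat \<Rightarrow> nat \<Rightarrow> nat \<Rightarrow> real) \<Rightarrow> ((int \<times> nat) \<times> (int \<times> nat)) set" where
  "MAP_step M A = {((k0, i), (k1, j)). 1 \<le> i \<and> i \<le> M \<and> 1 \<le> j \<and> j \<le> M \<and> GammaA A (k1 - k0) i j > 0}"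

definition MAP_leads :: "nat \<Rightarrow> (nat \<Rightarrow> nat \<Rightarrow> nat \<Rightarrow> real) \<Rightarrow> int \<times> nat \<Rightarrow> int \<times> nat \<Rightarrow> bool" where
  "MAP_leads M A x y \<longleftrightarrow> (x, y) \<in> (MAP_step M A)\<^sup>+"

end

theory Submission
  imports Defs
begin

lemma step_shift:
  assumes "((a,i),(b,j)) \<in> MAP_step M A"
  shows "((a+c,i),(b+c,j)) \<in> MAP_step M A"
  using assms by (simp add: MAP_step_def)

lemma R_shift_gen:
  assumes "(x,y) \<in> (MAP_step M A)\<^sup>+"
  shows "((fst x + c, snd x),(fst y + c, snd y)) \<in> (MAP_step M A)\<^sup>+"
  using assms
proof (induction rule: trancl_induct)
  case (base y)
  then show ?case using step_shift[of "fst x" "snd x" "fst y" "snd y"] by (metis prod.collapse r_into_trancl')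
next
  case (step y z)
  have "((fst y + c, snd y),(fst z + c, snd z)) \<in> MAP_step M A"
    using step(2) step_shift[of "fst y" "snd y" "fst z" "snd z"] by simp
  then show ?case using step(3) by (meson trancl.trancl_into_trancl)
qed

lemma R_shift:
  assumes "((a,i),(b,j)) \<in> (MAP_step M A)\<^sup>+"
  shows "((a+c,i),(b+c,j)) \<in> (MAP_step M A)\<^sup>+"
  using R_shift_gen[OF assms, of c] by simp

lemma edge_step:
  assumes "A m i j > 0" "1 \<le> i" "i \<le> M" "1 \<le> j" "j \<le> M"
  shows "((x,i),(x + int m - 1, j)) \<in> MAP_step M A"
  using assms by (simp add: MAP_step_def GammaA_def)

lemma R_phase:
  assumes "((a,i),(b,j)) \<in> (MAP_step M A)\<^sup>+"
  shows "1 \<le> i \<and> i \<le> M \<and> 1 \<le> j \<and> j \<le> M"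
  using assms
  by (induction "(a,i)" "(b,j)" arbitrary: b j rule: trancl.induct) (auto simp: MAP_step_def)

theorem proposition2p8:
  fixes M0 M :: nat
    and A B :: "nat \<Rightarrow> nat \<Rightarrow> nat \<Rightarrow> real"
    and B0 C0 :: "nat \<Rightarrow> nat \<Rightarrow> real"
  assumes "M0 \<ge> 1" and "M \<ge> 1"
    and A_nonneg: "\<And>k i j. 1 \<le> i \<Longrightarrow> i \<le> M \<Longrightarrow> 1 \<le> j \<Longrightarrow> j \<le> M \<Longrightarrow> A k i j \<ge> 0"
    and B0_nonneg: "\<And>i j. 1 \<le> i \<Longrightarrow> i \<le> M0 \<Longrightarrow> 1 \<le> j \<Longrightarrow> j \<le> M0 \<Longrightarrow> B0 i j \<ge> 0"
    and B_nonneg: "\<And>k i j. 1 \<le> k \<Longrightarrow> 1 \<le> i \<Longrightarrow> i \<le> M0 \<Longrightarrow> 1 \<le> j \<Longrightarrow> j \<le> M \<Longrightarrow> B k i j \<ge> 0"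
    and C0_nonneg: "\<And>i j. 1 \<le> i \<Longrightarrow> i \<le> M \<Longrightarrow> 1 \<le> j \<Longrightarrow> j \<le> M0 \<Longrightarrow> C0 i j \<ge> 0"
    and A_summable: "\<And>i j. 1 \<le> i \<Longrightarrow> i \<le> M \<Longrightarrow> 1 \<le> j \<Longrightarrow> j \<le> M \<Longrightarrow> summable (\<lambda>k. A k i j)"
    and A_stoch: "\<And>i. 1 \<le> i \<Longrightarrow> i \<le> M \<Longrightarrow> (\<Sum>j=1..M. Asum A i j) = 1"
    and B_summable: "\<And>i j. 1 \<le> i \<Longrightarrow> i \<le> M0 \<Longrightarrow> 1 \<le> j \<Longrightarrow> j \<le> M \<Longrightarrow> summable (\<lambda>k. B (Suc k) i j)"
    and B_stoch: "\<And>i. 1 \<le> i \<Longrightarrow> i \<le> M0 \<Longrightarrow>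
        (\<Sum>j=1..M0. B0 i j) + (\<Sum>j=1..M. (\<Sum>k. B (Suc k) i j)) = 1"
    and C_stoch: "\<And>i. 1 \<le> i \<Longrightarrow> i \<le> M \<Longrightarrow>
        (\<Sum>j=1..M0. C0 i j) + (\<Sum>j=1..M. (\<Sum>k. A (Suc k) i j)) = 1"
    and T_irred: "irreducible_on (state_space M0 M) (Tmat B0 B C0 A)"
    and A_irred: "irreducible_on {1..M} (Asum A)"
  shows "\<forall>j\<in>{1..M}. \<exists>k::int. k \<noteq> 0 \<and> MAP_leads M A (0, j) (k, j)"
proof (rule ccontr)
  let ?R = "(MAP_step M A)\<^sup>+"
  assume "\<not> ?thesis"
  then obtain j0 where j0: "j0 \<in> {1..M}" and noret: "\<And>k. ((0::int,j0),(k,j0)) \<in> ?R \<Longrightarrow> k = 0"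
    unfolding MAP_leads_def by blast
  have pos: "\<exists>m. A m i j > 0" if "i \<in> {1..M}" "j \<in> {1..M}" "Asum A i j > 0" for i j
  proof (rule ccontr)
    assume "\<not> ?thesis"
    then have "\<And>m. A m i j = 0" using A_nonneg that(1,2) by (meson atLeastAtMost_iff leI order_antisym)
    then have "Asum A i j = 0" by (simp add: Asum_def)
    then show False using that(3) by simp
  qed
  have reach: "\<exists>k. ((0::int,i),(k,j)) \<in> ?R" if "i \<in> {1..M}" "j \<in> {1..M}" for i j
  proof -
    have "(i,j) \<in> {(u, v). u \<in> {1..M} \<and> v \<in> {1..M} \<and> Asum A u v > 0}\<^sup>+"
      using A_irred that unfolding irreducible_on_def by blast
    then show ?thesis
    proof (induction rule: trancl_induct)
      case (base y)
      then obtain m where "A m i y > 0" using pos by blast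
      then have "((0,i),(0 + int m - 1, y)) \<in> MAP_step M A" using base by (intro edge_step) auto
      then show ?case by blast
    next
      case (step y z)
      then obtain k where k: "((0,i),(k,y)) \<in> ?R" by blast
      obtain m where "A m y z > 0" using pos step(2) by blast
      then have "((k,y),(k + int m - 1, z)) \<in> MAP_step M A" using step(2) by (intro edge_step) auto
      then show ?case using k by (meson trancl.trancl_into_trancl)
    qed
  qed
  have uniq: "a = b" if "((0::int,j0),(a,i)) \<in> ?R" "((0,j0),(b,i)) \<in> ?R" for a b i
  proof -
    have "i \<in> {1..M}" using R_phase[OF that(1)] by auto
    then obtain c where c: "((0::int,i),(c,j0)) \<in> ?R" using reach j0 by blast
    have "((0,j0),(a+c,j0)) \<in> ?R" using trancl_trans[OF that(1)] R_shift[OF c, of a] by (simp add: add.commute)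
    moreover have "((0,j0),(b+c,j0)) \<in> ?R" using trancl_trans[OF that(2)] R_shift[OF c, of b] by (simp add: add.commute)
    ultimately have "a + c = 0" "b + c = 0" using noret by blast+
    then show ?thesis by simp
  qed
  define \<phi> where "\<phi> i = (THE a. ((0::int,j0),(a,i)) \<in> ?R)" for i
  have phi: "((0::int,j0),(\<phi> i,i)) \<in> ?R" if iM: "i \<in> {1..M}" for i
  proof -
    obtain a where a: "((0::int,j0),(a,i)) \<in> ?R" using reach j0 iM by blast
    have "\<phi> i = a" unfolding \<phi>_def using a uniq by blast
    then show ?thesis using a by simp
  qed
  have pot: "y - x = \<phi> j - \<phi> i" if "((x,i),(y,j)) \<in> MAP_step M A" for x y i j
  proof -
    have i: "i \<in> {1..M}" and j: "j \<in> {1..M}" using that by (auto simp: MAP_step_def)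
    have "((\<phi> i, i),(y - x + \<phi> i, j)) \<in> MAP_step M A" using step_shift[OF that, of "\<phi> i - x"] by (simp add: algebra_simps)
    then have "((0,j0),(y - x + \<phi> i, j)) \<in> ?R" using phi[OF i] by (meson trancl.trancl_into_trancl)
    then have "y - x + \<phi> i = \<phi> j" using uniq phi[OF j] by blast
    then show ?thesis by simp
  qed
  let ?S = "state_space M0 M"
  let ?E = "{(u, v). u \<in> ?S \<and> v \<in> ?S \<and> Tmat B0 B C0 A u v > 0}"
  define P where "P k i z \<longleftrightarrow> (\<exists>l j. z = (l,j) \<and> l \<ge> 1 \<and> j \<in> {1..M} \<and> int l - \<phi> j = int k - \<phi> i)
      \<or> (\<exists>i'\<in>{1..M}. 1 - \<phi> i' = int k - \<phi> i)" for k i z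
  have one: "P k i z" if hP: "P k i y" and hE: "(y,z) \<in> ?E" for k i y z
  proof (cases "\<exists>i'\<in>{1..M}. 1 - \<phi> i' = int k - \<phi> i")
    case True then show ?thesis by (simp add: P_def)
  next
    case False
    then obtain l j where y: "y = (l,j)" "l \<ge> 1" "j \<in> {1..M}" "int l - \<phi> j = int k - \<phi> i"
      using hP unfolding P_def by blast
    obtain l' j' where z: "z = (l',j')" by (cases z)
    have T: "Tmat B0 B C0 A (l,j) (l',j') > 0" and zS: "(l',j') \<in> ?S" using hE y z by (simp_all del: Tmat.simps)
    show ?thesis
    proof (cases "l' = 0")
      case True
      have "l \<noteq> 0" using y(2) by simp
      then have "Tmat B0 B C0 A (l,j) (l',j') = (if l = 1 then C0 j j' else 0)" using True by simp
      then have "l = 1" using T by (metis less_irrefl)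
      then show ?thesis using y False by auto
    next
      case l': False
      then have j': "j' \<in> {1..M}" using zS by (auto simp: state_space_def)
      have le: "l \<le> l' + 1" and Apos: "A (l' + 1 - l) j j' > 0" proof -
        have "l \<noteq> 0" using y(2) by simp
        then have "Tmat B0 B C0 A (l,j) (l',j') = (if l \<le> l' + 1 then A (l' + 1 - l) j j' else 0)" using l' by simp
        then show "l \<le> l' + 1" "A (l' + 1 - l) j j' > 0" using T by (metis less_irrefl)+
      qed
      have "GammaA A (int l' - int l) j j' > 0" proof -
        have e: "nat (int l' - int l + 1) = l' + 1 - l" using le by simp
        have "-1 \<le> int l' - int l" using le by simp
        then show ?thesis using Apos unfolding GammaA_def e[symmetric] by simp
      qed
      then have "((int l, j),(int l', j')) \<in> MAP_step M A" using y(3) j' by (auto simp: MAP_step_def)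
      from pot[OF this] have "int l' - int l = \<phi> j' - \<phi> j" .
      then show ?thesis unfolding P_def using z l' j' y(4) by auto
    qed
  qed
  have Pall: "P k i z" if hR: "((k,i),z) \<in> ?E\<^sup>+" and hk: "k \<ge> 1" and hi: "i \<in> {1..M}" for k i z
    using hR
  proof (induction rule: trancl_induct)
    case (base y)
    have "P k i (k,i)" unfolding P_def using hk hi by auto
    then show ?case using one base by blast
  next
    case (step y z)
    then show ?case using one by blast
  qed
  define K where "K = nat (2 + 2 * (\<Sum>i\<in>{1..M}. \<bar>\<phi> i\<bar>))"
  have one_in: "(1::nat) \<in> {1..M}" using assms(2) by simp
  have s0: "0 \<le> (\<Sum>i\<in>{1..M}. \<bar>\<phi> i\<bar>)" by (simp add: sum_nonneg)
  have KK: "int K = 2 + 2 * (\<Sum>i\<in>{1..M}. \<bar>\<phi> i\<bar>)" unfolding K_def using s0 by simp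
  have K1: "K \<ge> 1" using KK s0 by linarith
  have "(K,1) \<in> ?S" "(0,1) \<in> ?S" using K1 assms(1,2) by (auto simp: state_space_def)
  then have "((K,1),(0,1)) \<in> ?E\<^sup>+" using T_irred unfolding irreducible_on_def by blast
  from Pall[OF this K1 one_in] obtain i' where i': "i' \<in> {1..M}" "1 - \<phi> i' = int K - \<phi> 1"
    unfolding P_def by auto
  have b1: "\<bar>\<phi> i'\<bar> \<le> (\<Sum>i\<in>{1..M}. \<bar>\<phi> i\<bar>)" by (rule member_le_sum) (use i' in auto)
  have b2: "\<bar>\<phi> 1\<bar> \<le> (\<Sum>i\<in>{1..M}. \<bar>\<phi> i\<bar>)" by (rule member_le_sum) (use one_in in auto)
  show False using KK using i' b1 b2 by linarith
qed

end
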